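(* Let $\mathcal{P}_n$ be a Poisson process of intensity $n$ on $[0,1]^d$, and let $\mathcal{C}(n,r)=\mathcal{C}(\mathcal{P}_n,r)$ be the Čech complex with radius-$r$ balls. Let $\alpha > 0$ be fixed. There exists a constant $C_2 > 0$ depending only on $\alpha$ and $d$ such that if $nr^d \le \frac{C_2}{(\log n)^{\alpha}}$ and $m \ge \alpha^{-1}\frac{\log n}{\log\log n}$, then with high probability (i.e. with probability tending to $1$ as $n\to\infty$) $\mathcal{C}(n,r)$ has no connected components with more than $m$ vertices. *)

theory Defs
  imports "HOL-Probability.Probability"
begin

text \<open>Sample space: pairs (K, X) with K ~ Poisson(\<lambda>) and X an i.i.d. sequence of
  uniform points in the cube, independent of K. The process is the point set
  {X 0, ..., X (K-1)} (standard construction of a homogeneous Poisson process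
  on a set of finite volume).\<close>

definition unit_cube :: "(real^'d) set" where
  "unit_cube = cbox 0 One"

definition poisson_process :: "real \<Rightarrow> (nat \<times> (nat \<Rightarrow> real^'d)) measure" where
  "poisson_process lam =
     measure_pmf (poisson_pmf lam) \<Otimes>\<^sub>M
     (\<Pi>\<^sub>M i\<in>(UNIV::nat set). uniform_measure lborel (unit_cube :: (real^'d) set))"

text \<open>1-skeleton of the Cech complex with balls of radius r: the vertices
  (indexed by i < K) X i, X j are joined iff the closed balls of radius r around
  them intersect, i.e. dist (X i) (X j) \<le> 2 r. Connected components of the
  Cech complex are those of its 1-skeleton.\<close>

definition cech_edge :: "real \<Rightarrow> nat \<Rightarrow> (nat \<Rightarrow> 'a::metric_space) \<Rightarrow> (nat \<times> nat) set" where
  "cech_edge r K X = {(i, j). i < K \<and> j < K \<and> i \<noteq> j \<and> dist (X i) (X j) \<le> 2 * r}"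

definition cech_component :: "real \<Rightarrow> nat \<Rightarrow> (nat \<Rightarrow> 'a::metric_space) \<Rightarrow> nat \<Rightarrow> nat set" where
  "cech_component r K X i = {j. j < K \<and> (i, j) \<in> (cech_edge r K X)\<^sup>*}"

definition no_component_larger :: "real \<Rightarrow> nat \<Rightarrow> nat \<times> (nat \<Rightarrow> 'a::metric_space) \<Rightarrow> bool" where
  "no_component_larger r m \<omega> =
     (\<forall>i < fst \<omega>. card (cech_component r (fst \<omega>) (snd \<omega>) i) \<le> m)"

end

theory Submission
  imports Defs "HOL-Real_Asymp.Real_Asymp"
begin


lemma lborel_cube: "emeasure lborel (unit_cube :: (real^'d) set) = 1"
  unfolding unit_cube_def
  by (simp add: emeasure_lborel_cbox_eq inner_Basis)

lemma prob_U: "prob_space (uniform_measure lborel (unit_cube :: (real^'d) set))"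
  by (rule prob_space_uniform_measure) (simp_all add: lborel_cube)

lemma ball_U:
  fixes c :: "real^'d" assumes "0 \<le> \<rho>"
  shows "emeasure (uniform_measure lborel (unit_cube :: (real^'d) set)) {y. dist y c \<le> \<rho>}
          \<le> ennreal ((2*\<rho>) ^ CARD('d))"
proof -
  have cl: "{y. dist y c \<le> \<rho>} = cball c \<rho>" by (auto simp: dist_commute)
  have sub: "cball c \<rho> \<subseteq> cbox (c - \<rho> *\<^sub>R One) (c + \<rho> *\<^sub>R One)"
  proof
    fix y assume "y \<in> cball c \<rho>"
    then have "dist c y \<le> \<rho>" by simp
    then have "\<bar>(c - y) \<bullet> b\<bar> \<le> \<rho>" if "b \<in> Basis" for b
      using Basis_le_norm[OF that, of "c - y"] by (simp add: dist_norm)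
    then show "y \<in> cbox (c - \<rho> *\<^sub>R One) (c + \<rho> *\<^sub>R One)"
      by (auto simp: mem_box inner_diff_left inner_add_left abs_le_iff) (smt (verit))+
  qed
  have "emeasure (uniform_measure lborel (unit_cube :: (real^'d) set)) {y. dist y c \<le> \<rho>}
      = emeasure lborel (unit_cube \<inter> cball c \<rho>)"
    by (subst emeasure_uniform_measure) (auto simp: cl lborel_cube unit_cube_def divide_ennreal_def)
  also have "\<dots> \<le> emeasure lborel (cbox (c - \<rho> *\<^sub>R One) (c + \<rho> *\<^sub>R One))"
    using sub by (intro emeasure_mono) auto
  also have "\<dots> = ennreal ((2*\<rho>) ^ CARD('d))"
  proof -
    have one: "One \<bullet> b = (1::real)" if "b \<in> (Basis::(real^'d) set)" for b
      using that by (simp add: inner_sum_left inner_Basis)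
    have eq: "(c + \<rho> *\<^sub>R One - (c - \<rho> *\<^sub>R One)) = (2*\<rho>) *\<^sub>R (One::real^'d)"
      by (simp add: vec_eq_iff algebra_simps)
    have "emeasure lborel (cbox (c - \<rho> *\<^sub>R One) (c + \<rho> *\<^sub>R One)) = ennreal (\<Prod>b\<in>(Basis::(real^'d) set). 2*\<rho>)"
      unfolding emeasure_lborel_cbox_eq eq using assms
      by (auto simp: one inner_diff_left inner_add_left intro!: prod.cong arg_cong[where f=ennreal])
    then show ?thesis by simp
  qed
  finally show ?thesis .
qed


abbreviation U where "U \<equiv> uniform_measure lborel (unit_cube :: (real^'d) set)"

lemma sets_U[simp, measurable_cong]: "sets (U :: (real^'d) measure) = sets borel"
  by simp

lemma comp_meas:
  assumes "i \<in> J"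
  shows "(\<lambda>Y. Y i) \<in> borel_measurable (PiM J (\<lambda>_. U :: (real^'d) measure))"
  using measurable_component_singleton[OF assms, of "\<lambda>_. U :: (real^'d) measure"]
    measurable_cong_sets[OF refl sets_U, of "PiM J (\<lambda>_. U :: (real^'d) measure)"] by metis

lemma meas_E:
  assumes "finite S" "\<forall>s\<in>S. a s \<in> J \<and> b s \<in> J"
  shows "{Y \<in> space (PiM J (\<lambda>_. U :: (real^'d) measure)). \<forall>s\<in>S. dist (Y (a s)) (Y (b s)) \<le> \<rho>}
           \<in> sets (PiM J (\<lambda>_. U :: (real^'d) measure))"
proof (rule sets.sets_Collect_finite_All[OF _ assms(1)])
  fix s assume "s \<in> S"
  then have m: "(\<lambda>Y. Y (a s)) \<in> borel_measurable (PiM J (\<lambda>_. U :: (real^'d) measure))"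
       "(\<lambda>Y. Y (b s)) \<in> borel_measurable (PiM J (\<lambda>_. U :: (real^'d) measure))"
    using assms(2) by (auto intro!: comp_meas)
  show "{Y \<in> space (PiM J (\<lambda>_. U :: (real^'d) measure)). dist (Y (a s)) (Y (b s)) \<le> \<rho>} \<in> sets (PiM J (\<lambda>_. U :: (real^'d) measure))"
    by (intro borel_measurable_le borel_measurable_dist m borel_measurable_const)
qed

lemma core:
  fixes v :: "nat \<Rightarrow> 'i" and \<rho> :: real
  assumes "inj_on v {..<k}" "\<forall>s\<in>{1..<k}. p s < s" "0 \<le> \<rho>"
  shows "emeasure (PiM (v`{..<k}) (\<lambda>_. U :: (real^'d) measure))
     {Y \<in> space (PiM (v`{..<k}) (\<lambda>_. U :: (real^'d) measure)). \<forall>s\<in>{1..<k}. dist (Y (v s)) (Y (v (p s))) \<le> \<rho>}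
     \<le> ennreal ((2*\<rho>)^CARD('d)) ^ (k - 1)"
  using assms
proof (induction k)
  case 0
  interpret P: prob_space "PiM (v`{..<0}) (\<lambda>_. U :: (real^'d) measure)"
    by (intro prob_space_PiM prob_U)
  show ?case using P.emeasure_space_1 by simp
next
  case (Suc k)
  define J where "J = v`{..<k}"
  define q where "q = ennreal ((2*\<rho>)^CARD('d))"
  interpret P: prob_space "PiM (v`{..<Suc k}) (\<lambda>_. U :: (real^'d) measure)"
    by (intro prob_space_PiM prob_U)
  interpret S: product_sigma_finite "\<lambda>_::'i. U :: (real^'d) measure"
    unfolding product_sigma_finite_def
    using prob_U prob_space_imp_sigma_finite by blast
  show ?case
  proof (cases "k = 0")
    case True
    then show ?thesis using P.emeasure_space_1 by simp
  next
    case False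
    have inj: "inj_on v {..<k}" using Suc.prems(1) by (auto simp: inj_on_def)
    have vk: "v k \<notin> J"
    proof
      assume "v k \<in> J"
      then obtain x where x: "x < k" "v k = v x" by (auto simp: J_def)
      then have "k = x" using inj_onD[OF Suc.prems(1), of k x] by auto
      then show False using x by simp
    qed
    have J': "v`{..<Suc k} = insert (v k) J" by (auto simp: J_def lessThan_Suc)
    have pk: "p k < k" using Suc.prems(2) False by auto
    have ps: "\<forall>s\<in>{1..<k}. p s < s" using Suc.prems(2) by auto
    define E where "E = {Y \<in> space (PiM J (\<lambda>_. U :: (real^'d) measure)). \<forall>s\<in>{1..<k}. dist (Y (v s)) (Y (v (p s))) \<le> \<rho>}"
    define E' where "E' = {Y \<in> space (PiM (insert (v k) J) (\<lambda>_. U :: (real^'d) measure)). \<forall>s\<in>{1..<Suc k}. dist (Y (v s)) (Y (v (p s))) \<le> \<rho>}"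
    have IH: "emeasure (PiM J (\<lambda>_. U)) E \<le> q ^ (k - 1)"
      using Suc.IH[OF inj ps Suc.prems(3)] unfolding E_def J_def q_def .
    have Esets: "E \<in> sets (PiM J (\<lambda>_. U))"
      unfolding E_def J_def
    proof measurable
      fix s assume s: "s \<in> {1..<k}"
      then have "p s < k" using ps by (meson atLeastLessThan_iff order.strict_trans)
      then show "v (p s) \<in> v ` {..<k}" by auto
    qed
    have E'sets: "E' \<in> sets (PiM (insert (v k) J) (\<lambda>_. U))"
      unfolding E'_def
    proof (rule meas_E)
      show "\<forall>s\<in>{1..<Suc k}. v s \<in> insert (v k) J \<and> v (p s) \<in> insert (v k) J"
      proof
        fix s assume s: "s \<in> {1..<Suc k}"
        then have "p s < Suc k" using Suc.prems(2) by (meson atLeastLessThan_iff order.strict_trans)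
        then show "v s \<in> insert (v k) J \<and> v (p s) \<in> insert (v k) J" using s by (auto simp: J_def less_Suc_eq)
      qed
    qed simp
    have "emeasure (PiM (insert (v k) J) (\<lambda>_. U)) E' = \<integral>\<^sup>+ Y. indicator E' Y \<partial>PiM (insert (v k) J) (\<lambda>_. U)"
      using E'sets by simp
    also have "\<dots> = \<integral>\<^sup>+ x. (\<integral>\<^sup>+ y. indicator E' (x(v k := y)) \<partial>U) \<partial>PiM J (\<lambda>_. U)"
      using vk E'sets by (subst S.product_nn_integral_insert) (auto simp: J_def)
    also have "\<dots> \<le> \<integral>\<^sup>+ x. indicator E x * q \<partial>PiM J (\<lambda>_. U)"
    proof (rule nn_integral_mono)
      fix x assume x: "x \<in> space (PiM J (\<lambda>_. U :: (real^'d) measure))"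
      have "(\<integral>\<^sup>+ y. indicator E' (x(v k := y)) \<partial>U) =
            (\<integral>\<^sup>+ y. indicator E x * indicator {y. dist y (x (v (p k))) \<le> \<rho>} y \<partial>U)"
      proof (rule nn_integral_cong)
        fix y assume y: "y \<in> space (U :: (real^'d) measure)"
        define z where "z = x(v k := y)"
        have sp: "z \<in> space (PiM (insert (v k) J) (\<lambda>_. U :: (real^'d) measure))"
          using x y by (auto simp: z_def space_PiM PiE_def extensional_def Pi_def)
        have vs: "v s \<in> J" if "s < k" for s using that by (auto simp: J_def)
        have zs: "z (v s) = x (v s)" if "s < k" for s using vs[OF that] vk by (auto simp: z_def)
        have zps: "z (v (p s)) = x (v (p s))" if "s \<in> {1..<k}" for s
        proof -
          have "p s < s" using that ps by blast
          then show ?thesis using that zs[of "p s"] by auto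
        qed
        have zpk: "z (v (p k)) = x (v (p k))" using zs[OF pk] .
        have zk: "z (v k) = y" by (simp add: z_def)
        have spl: "{1..<Suc k} = insert k {1..<k}" using False by auto
        have "(\<forall>s\<in>{1..<Suc k}. dist (z (v s)) (z (v (p s))) \<le> \<rho>) \<longleftrightarrow>
              (\<forall>s\<in>{1..<k}. dist (x (v s)) (x (v (p s))) \<le> \<rho>) \<and> dist y (x (v (p k))) \<le> \<rho>"
          unfolding spl using zs zps zk zpk by auto
        then have "(z \<in> E') \<longleftrightarrow> (x \<in> E \<and> dist y (x (v (p k))) \<le> \<rho>)"
          using sp x by (auto simp: E_def E'_def)
        then have "(x(v k := y) \<in> E') \<longleftrightarrow> (x \<in> E \<and> dist y (x (v (p k))) \<le> \<rho>)"
          by (simp add: z_def)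
        then show "indicator E' (x(v k := y)) = (indicator E x * indicator {y. dist y (x (v (p k))) \<le> \<rho>} y :: ennreal)"
          by (auto simp: indicator_def)
      qed
      also have "\<dots> = indicator E x * emeasure U {y. dist y (x (v (p k))) \<le> \<rho>}"
        by (subst nn_integral_cmult_indicator) auto
      also have "\<dots> \<le> indicator E x * q"
        unfolding q_def using ball_U[OF Suc.prems(3)] by (intro mult_left_mono) auto
      finally show "(\<integral>\<^sup>+ y. indicator E' (x(v k := y)) \<partial>U) \<le> indicator E x * q" .
    qed
    also have "\<dots> = q * emeasure (PiM J (\<lambda>_. U)) E"
      using Esets by (subst nn_integral_multc) (auto simp: mult.commute)
    also have "\<dots> \<le> q * q ^ (k - 1)"
      using IH by (intro mult_left_mono) auto
    also have "\<dots> = q ^ (Suc k - 1)" using False by (cases k) auto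
    finally show ?thesis unfolding E'_def J' q_def .
  qed
qed


abbreviation Q where "Q \<equiv> PiM (UNIV::nat set) (\<lambda>_. U :: (real^'d) measure)"

lemma prod_Q: "product_prob_space (\<lambda>_::nat. U :: (real^'d) measure)"
  unfolding product_prob_space_def product_prob_space_axioms_def product_sigma_finite_def
  using prob_U prob_space_imp_sigma_finite by blast

lemma E_Q:
  fixes v :: "nat \<Rightarrow> nat" and \<rho> :: real
  assumes "inj_on v {..<k}" "\<forall>s\<in>{1..<k}. p s < s" "0 \<le> \<rho>"
  shows "emeasure (Q :: (nat \<Rightarrow> real^'d) measure)
     {X \<in> space Q. \<forall>s\<in>{1..<k}. dist (X (v s)) (X (v (p s))) \<le> \<rho>}
     \<le> ennreal ((2*\<rho>)^CARD('d)) ^ (k - 1)"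
proof -
  interpret PP: product_prob_space "\<lambda>_::nat. U :: (real^'d) measure" UNIV by (rule prod_Q)
  define J where "J = v ` {..<k}"
  define EJ where "EJ = {Y \<in> space (PiM J (\<lambda>_. U :: (real^'d) measure)). \<forall>s\<in>{1..<k}. dist (Y (v s)) (Y (v (p s))) \<le> \<rho>}"
  have vJ: "\<forall>s\<in>{1..<k}. v s \<in> J \<and> v (p s) \<in> J"
  proof
    fix s assume s: "s \<in> {1..<k}"
    then have "p s < k" using assms(2) by (meson atLeastLessThan_iff order.strict_trans)
    then show "v s \<in> J \<and> v (p s) \<in> J" using s by (auto simp: J_def)
  qed
  have EJs: "EJ \<in> sets (PiM J (\<lambda>_. U :: (real^'d) measure))"
    unfolding EJ_def by (rule meas_E) (use vJ in auto)
  have fin: "finite J" by (simp add: J_def)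
  have "emeasure (PiM J (\<lambda>_. U :: (real^'d) measure)) EJ =
        emeasure (distr (Q :: (nat \<Rightarrow> real^'d) measure) (PiM J (\<lambda>_. U :: (real^'d) measure)) (\<lambda>x. restrict x J)) EJ"
    using PP.distr_PiM_restrict_finite[OF fin] by simp
  also have "\<dots> = emeasure (Q :: (nat \<Rightarrow> real^'d) measure) ((\<lambda>x. restrict x J) -` EJ \<inter> space (Q :: (nat \<Rightarrow> real^'d) measure))"
    using EJs by (intro emeasure_distr) (auto intro!: measurable_restrict_subset)
  also have "(\<lambda>x. restrict x J) -` EJ \<inter> space (Q :: (nat \<Rightarrow> real^'d) measure) = {X \<in> space (Q :: (nat \<Rightarrow> real^'d) measure). \<forall>s\<in>{1..<k}. dist (X (v s)) (X (v (p s))) \<le> \<rho>}"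
    using vJ by (auto simp: EJ_def space_PiM PiE_def Pi_def)
  finally have "emeasure (Q :: (nat \<Rightarrow> real^'d) measure) {X \<in> space (Q :: (nat \<Rightarrow> real^'d) measure). \<forall>s\<in>{1..<k}. dist (X (v s)) (X (v (p s))) \<le> \<rho>} = emeasure (PiM J (\<lambda>_. U :: (real^'d) measure)) EJ" by simp
  also have "\<dots> \<le> ennreal ((2*\<rho>)^CARD('d)) ^ (k - 1)"
    unfolding EJ_def J_def by (rule core[OF assms])
  finally show ?thesis .
qed


definition Pmon :: "nat \<Rightarrow> (nat \<Rightarrow> nat) set" where
  "Pmon k = {p \<in> {1..<k} \<rightarrow>\<^sub>E {..<k}. (\<forall>s\<in>{1..<k}. p s < s) \<and>
      (\<forall>s\<in>{1..<k}. \<forall>s'\<in>{1..<k}. s \<le> s' \<longrightarrow> p s \<le> p s')}"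

lemma finite_Pmon: "finite (Pmon k)"
proof -
  have "Pmon k \<subseteq> {1..<k} \<rightarrow>\<^sub>E {..<k}" by (auto simp: Pmon_def)
  then show ?thesis by (rule finite_subset) (intro finite_PiE; simp)
qed

lemma Pmon_inj_aux:
  assumes p: "p \<in> Pmon k" and q: "q \<in> Pmon k"
    and eq: "(\<lambda>s. s + p s) ` {1..<k} = (\<lambda>s. s + q s) ` {1..<k}"
  shows "s \<in> {1..<k} \<Longrightarrow> p s = q s"
proof (induction s rule: less_induct)
  case (less s)
  define A where "A = {1..<k}"
  have pm: "\<And>a b. a \<in> A \<Longrightarrow> b \<in> A \<Longrightarrow> a < b \<Longrightarrow> a + p a < b + p b"
    using p unfolding Pmon_def A_def by (auto intro: add_less_le_mono)
  have qm: "\<And>a b. a \<in> A \<Longrightarrow> b \<in> A \<Longrightarrow> a < b \<Longrightarrow> a + q a < b + q b"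
    using q unfolding Pmon_def A_def by (auto intro: add_less_le_mono)
  have sA: "s \<in> A" using less.prems by (simp add: A_def)
  have IH: "\<And>t. t \<in> A \<Longrightarrow> t < s \<Longrightarrow> p t = q t" using less.IH by (auto simp: A_def)
  have eqA: "(\<lambda>s. s + p s) ` A = (\<lambda>s. s + q s) ` A" using eq by (simp add: A_def)
  obtain t where t: "t \<in> A" "s + p s = t + q t"
    using sA eqA by (metis (no_types, lifting) image_eqI imageE)
  obtain u where u: "u \<in> A" "s + q s = u + p u"
    using sA eqA by (metis (no_types, lifting) image_eqI imageE)
  have "t = s"
  proof (rule ccontr)
    assume "t \<noteq> s"
    then consider "t < s" | "s < t" by linarith
    then show False
    proof cases
      case 1
      then have "t + q t = t + p t" using IH t(1) by simp
      also have "\<dots> < s + p s" using pm[OF t(1) sA 1] .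
      finally show False using t(2) by simp
    next
      case 2
      have st: "s + q s < t + q t" using qm[OF sA t(1) 2] .
      consider "u < s" | "u = s" | "s < u" by linarith
      then show False
      proof cases
        case 1
        then have "u + p u = u + q u" using IH u(1) by simp
        also have "\<dots> < s + q s" using qm[OF u(1) sA 1] .
        finally show False using u(2) by simp
      next
        case 2 then show False using u st t(2) by simp
      next
        case 3
        have "s + p s < u + p u" using pm[OF sA u(1) 3] .
        then show False using st t(2) u(2) by simp
      qed
    qed
  qed
  then show ?case using t(2) by simp
qed

lemma card_Pmon: "card (Pmon k) \<le> 4 ^ k"
proof -
  define f where "f p = (\<lambda>s. s + p s) ` {1..<k}" for p :: "nat \<Rightarrow> nat"
  have inj: "inj_on f (Pmon k)"
  proof (rule inj_onI)
    fix p q assume p: "p \<in> Pmon k" and q: "q \<in> Pmon k" and e: "f p = f q"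
    have "\<And>s. s \<in> {1..<k} \<Longrightarrow> p s = q s"
      using Pmon_inj_aux[OF p q] e by (simp add: f_def)
    moreover have "p \<in> {1..<k} \<rightarrow>\<^sub>E {..<k}" "q \<in> {1..<k} \<rightarrow>\<^sub>E {..<k}" using p q by (auto simp: Pmon_def)
    ultimately show "p = q" by (intro PiE_ext) auto
  qed
  have sub: "f ` Pmon k \<subseteq> Pow {..<2*k}"
  proof
    fix X assume "X \<in> f ` Pmon k"
    then obtain p where p: "p \<in> Pmon k" "X = f p" by auto
    have "s + p s < 2 * k" if s: "s \<in> {1..<k}" for s
    proof -
      have "p s < s" using p(1) s by (auto simp: Pmon_def)
      then show ?thesis using s by simp
    qed
    then show "X \<in> Pow {..<2*k}" using p(2) by (auto simp: f_def)
  qed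
  have "card (Pmon k) = card (f ` Pmon k)" using inj by (simp add: card_image)
  also have "\<dots> \<le> card (Pow {..<2*k})" using sub by (intro card_mono) auto
  also have "\<dots> = 4 ^ k" by (simp add: card_Pow power_mult)
  finally show ?thesis .
qed



lemma comp_sub: "cech_component r K X i \<subseteq> {..<K}"
  by (auto simp: cech_component_def)

lemma comp_self: "i < K \<Longrightarrow> i \<in> cech_component r K X i"
  by (auto simp: cech_component_def)

lemma conn:
  assumes "i \<in> S" "S \<subseteq> cech_component r K X i" "y0 \<in> cech_component r K X i" "y0 \<notin> S"
  shows "\<exists>x\<in>S. \<exists>y. y \<in> cech_component r K X i \<and> y \<notin> S \<and> (x, y) \<in> cech_edge r K X"
proof -
  have "(i, y0) \<in> (cech_edge r K X)\<^sup>*" using assms(3) by (simp add: cech_component_def)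
  then show ?thesis using assms(4)
  proof (induction rule: rtrancl_induct)
    case base then show ?case using assms(1) by simp
  next
    case (step y z)
    show ?case
    proof (cases "y \<in> S")
      case True
      have "z < K" using step.hyps(2) by (simp add: cech_edge_def)
      then have "z \<in> cech_component r K X i"
        using step.hyps by (auto simp: cech_component_def)
      then show ?thesis using True step by blast
    next
      case False then show ?thesis using step.IH by blast
    qed
  qed
qed

definition bfs_inv where
  "bfs_inv r K X i j v p \<longleftrightarrow> v 0 = i \<and> inj_on v {..<j} \<and> v ` {..<j} \<subseteq> cech_component r K X i \<and>
     (\<forall>s\<in>{1..<j}. p s < s \<and> (v (p s), v s) \<in> cech_edge r K X) \<and>
     (\<forall>s\<in>{1..<j}. \<forall>s'\<in>{1..<j}. s \<le> s' \<longrightarrow> p s \<le> p s') \<and>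
     (\<forall>t. \<forall>s\<in>{1..<j}. t < p s \<longrightarrow> (\<forall>y. (v t, y) \<in> cech_edge r K X \<and> y \<in> cech_component r K X i \<longrightarrow> y \<in> v ` {..<j}))"

lemma bfs:
  assumes "i < K" "1 \<le> j" "j \<le> card (cech_component r K X i)"
  shows "\<exists>v p. bfs_inv r K X i j v p"
  using assms(2,3)
proof (induction j)
  case 0 then show ?case by simp
next
  case (Suc j)
  show ?case
  proof (cases "j = 0")
    case True
    then show ?thesis using assms(1) comp_self[of i K r X]
      by (auto simp: bfs_inv_def inj_on_def intro!: exI[of _ "\<lambda>_. i"])
  next
    case False
    define C where "C = cech_component r K X i"
    define R where "R = cech_edge r K X"
    obtain v p where inv: "bfs_inv r K X i j v p" using Suc False by auto
    define S where "S = v ` {..<j}"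
    have finC: "finite C" using comp_sub[of r K X i] by (auto simp: C_def intro: finite_subset)
    have injv: "inj_on v {..<j}" and SC: "S \<subseteq> C" and v0: "v 0 = i"
      using inv by (auto simp: bfs_inv_def S_def C_def)
    have cardS: "card S = j" using injv by (simp add: S_def card_image)
    have "S \<noteq> C" using cardS Suc.prems by (auto simp: C_def)
    then obtain y0 where y0: "y0 \<in> C" "y0 \<notin> S" using SC by auto
    have iS: "i \<in> S" using v0 False by (auto simp: S_def)
    obtain x y where xy: "x \<in> S" "y \<in> C" "y \<notin> S" "(x, y) \<in> R"
      using conn[OF iS SC[unfolded C_def] y0[unfolded C_def]] by (auto simp: C_def R_def)
    define T where "T = {t. t < j \<and> (\<exists>y. y \<in> C \<and> y \<notin> S \<and> (v t, y) \<in> R)}"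
    obtain tx where tx: "tx < j" "x = v tx" using xy(1) by (auto simp: S_def)
    have "tx \<in> T" using tx xy by (auto simp: T_def)
    define t0 where "t0 = (LEAST t. t \<in> T)"
    have t0T: "t0 \<in> T" using \<open>tx \<in> T\<close> unfolding t0_def by (rule LeastI)
    have t0min: "\<And>t. t < t0 \<Longrightarrow> t \<notin> T" unfolding t0_def by (rule not_less_Least)
    obtain y1 where y1: "y1 \<in> C" "y1 \<notin> S" "(v t0, y1) \<in> R" "t0 < j" using t0T by (auto simp: T_def)
    define v' where "v' = v(j := y1)"
    define p' where "p' = p(j := t0)"
    have v'eq: "\<And>t. t < j \<Longrightarrow> v' t = v t" by (simp add: v'_def)
    have S': "v' ` {..<Suc j} = insert y1 S"
      by (auto simp: v'_def S_def lessThan_Suc)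
    have old: "\<forall>s\<in>{1..<j}. p s < s \<and> (v (p s), v s) \<in> R"
      "\<forall>s\<in>{1..<j}. \<forall>s'\<in>{1..<j}. s \<le> s' \<longrightarrow> p s \<le> p s'"
      "\<forall>t. \<forall>s\<in>{1..<j}. t < p s \<longrightarrow> (\<forall>y. (v t, y) \<in> R \<and> y \<in> C \<longrightarrow> y \<in> S)"
      using inv by (auto simp: bfs_inv_def R_def C_def S_def)
    have pt0: "p s \<le> t0" if "s \<in> {1..<j}" for s
    proof (rule ccontr)
      assume "\<not> p s \<le> t0"
      then have "t0 < p s" by simp
      then have "y1 \<in> S" using old(3) that y1 by blast
      then show False using y1 by simp
    qed
    have "bfs_inv r K X i (Suc j) v' p'"
      unfolding bfs_inv_def
    proof (intro conjI)
      show "v' 0 = i" using v0 False by (simp add: v'_def)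
      show "inj_on v' {..<Suc j}"
        using injv y1(2) by (auto simp: v'_def S_def lessThan_Suc inj_on_def)
      show "v' ` {..<Suc j} \<subseteq> cech_component r K X i"
        using S' SC y1 by (auto simp: C_def)
      show "\<forall>s\<in>{1..<Suc j}. p' s < s \<and> (v' (p' s), v' s) \<in> cech_edge r K X"
      proof
        fix s assume s: "s \<in> {1..<Suc j}"
        show "p' s < s \<and> (v' (p' s), v' s) \<in> cech_edge r K X"
        proof (cases "s = j")
          case True
          then show ?thesis using y1 v'eq[OF y1(4)] by (simp add: p'_def v'_def R_def)
        next
          case False
          then have sj: "s \<in> {1..<j}" using s by auto
          then have "p s < s" "(v (p s), v s) \<in> R" using old(1) by auto
          then show ?thesis using sj False v'eq[of s] v'eq[of "p s"] by (simp add: p'_def R_def)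
        qed
      qed
      show "\<forall>s\<in>{1..<Suc j}. \<forall>s'\<in>{1..<Suc j}. s \<le> s' \<longrightarrow> p' s \<le> p' s'"
      proof (intro ballI impI)
        fix s s' assume s: "s \<in> {1..<Suc j}" and s': "s' \<in> {1..<Suc j}" and le: "s \<le> s'"
        show "p' s \<le> p' s'"
        proof (cases "s' = j")
          case True
          then show ?thesis using pt0[of s] s by (cases "s = j") (auto simp: p'_def)
        next
          case False
          then have "s' \<in> {1..<j}" "s \<in> {1..<j}" "s \<noteq> j" using s s' le by auto
          then show ?thesis using old(2) le False by (auto simp: p'_def)
        qed
      qed
      show "\<forall>t. \<forall>s\<in>{1..<Suc j}. t < p' s \<longrightarrow> (\<forall>y. (v' t, y) \<in> cech_edge r K X \<and> y \<in> cech_component r K X i \<longrightarrow> y \<in> v' ` {..<Suc j})"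
      proof (intro allI ballI impI)
        fix t s y assume s: "s \<in> {1..<Suc j}" and ts: "t < p' s"
          and y: "(v' t, y) \<in> cech_edge r K X \<and> y \<in> cech_component r K X i"
        show "y \<in> v' ` {..<Suc j}"
        proof (cases "s = j")
          case True
          then have tt0: "t < t0" using ts by (simp add: p'_def)
          then have tj: "t < j" using y1(4) by simp
          have "t \<notin> T" using t0min[OF tt0] .
          then have "y \<in> S" using tj y v'eq[OF tj] by (auto simp: T_def R_def C_def)
          then show ?thesis using S' by auto
        next
          case False
          then have sj: "s \<in> {1..<j}" using s by auto
          then have "p s < s" using old(1) by auto
          then have tj: "t < j" using ts False sj by (simp add: p'_def)
          have tps: "t < p s" using ts False by (simp add: p'_def)
          have "(v t, y) \<in> R \<and> y \<in> C" using y v'eq[OF tj] by (simp add: R_def C_def)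
          then have "y \<in> S" using old(3) sj tps by blast
          then show ?thesis using S' by auto
        qed
      qed
    qed
    then show ?thesis by blast
  qed
qed

lemma big_comp:
  assumes "i < K" "k \<le> card (cech_component r K X i)" "1 \<le> k"
  shows "\<exists>v\<in>{..<k} \<rightarrow>\<^sub>E {..<K}. \<exists>p\<in>Pmon k. inj_on v {..<k} \<and>
            (\<forall>s\<in>{1..<k}. dist (X (v s)) (X (v (p s))) \<le> 2 * r)"
proof -
  obtain v p where inv: "bfs_inv r K X i k v p" using bfs[OF assms(1,3,2)] by auto
  define v2 where "v2 = restrict v {..<k}"
  define p2 where "p2 = restrict p {1..<k}"
  have pl: "\<forall>s\<in>{1..<k}. p s < s \<and> (v (p s), v s) \<in> cech_edge r K X" using inv by (simp add: bfs_inv_def)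
  have v2: "v2 \<in> {..<k} \<rightarrow>\<^sub>E {..<K}"
    using inv comp_sub[of r K X i] by (auto simp: v2_def bfs_inv_def)
  have p2: "p2 \<in> Pmon k"
    using inv unfolding Pmon_def p2_def bfs_inv_def by (auto intro: order.strict_trans)
  have inj: "inj_on v2 {..<k}" using inv by (auto simp: v2_def bfs_inv_def inj_on_def)
  have "\<forall>s\<in>{1..<k}. dist (X (v2 s)) (X (v2 (p2 s))) \<le> 2 * r"
  proof
    fix s assume s: "s \<in> {1..<k}"
    then have "p s < s" "(v (p s), v s) \<in> cech_edge r K X" using pl by auto
    then show "dist (X (v2 s)) (X (v2 (p2 s))) \<le> 2 * r"
      using s by (auto simp: v2_def p2_def cech_edge_def dist_commute)
  qed
  then show ?thesis using v2 p2 inj by blast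
qed



lemma E_sets:
  fixes a b :: "nat \<Rightarrow> nat"
  assumes "finite S"
  shows "{X \<in> space (Q :: (nat \<Rightarrow> real^'d) measure). \<forall>s\<in>S. dist (X (a s)) (X (b s)) \<le> \<rho>} \<in> sets Q"
  using meas_E[where S=S and a=a and b=b and J=UNIV and \<rho>=\<rho>] assms by simp

lemma bad_K:
  fixes r :: real and K m :: nat
  shows "emeasure (Q :: (nat \<Rightarrow> real^'d) measure) {X \<in> space Q. \<not> no_component_larger r m (K, X)}
     \<le> ennreal (real K ^ Suc m * 4 ^ Suc m * ((4 * max r 0) ^ CARD('d)) ^ m)"
proof -
  define k where "k = Suc m"
  define \<rho> where "\<rho> = max r 0"
  have \<rho>: "0 \<le> \<rho>" "r \<le> \<rho>" by (auto simp: \<rho>_def)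
  define F where "F = {vp \<in> ({..<k} \<rightarrow>\<^sub>E {..<K}) \<times> Pmon k. inj_on (fst vp) {..<k}}"
  define E where "E vp = {X \<in> space (Q :: (nat \<Rightarrow> real^'d) measure). \<forall>s\<in>{1..<k}. dist (X (fst vp s)) (X (fst vp (snd vp s))) \<le> 2 * \<rho>}" for vp :: "(nat \<Rightarrow> nat) \<times> (nat \<Rightarrow> nat)"
  have finF: "finite F" unfolding F_def
    by (rule finite_subset[of _ "({..<k} \<rightarrow>\<^sub>E {..<K}) \<times> Pmon k"]) (auto intro!: finite_PiE finite_Pmon)
  have cardF: "card F \<le> K ^ k * 4 ^ k"
  proof -
    have "card F \<le> card (({..<k} \<rightarrow>\<^sub>E {..<K}) \<times> Pmon k)"
      unfolding F_def by (rule card_mono) (auto intro!: finite_PiE finite_Pmon)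
    also have "\<dots> = K ^ k * card (Pmon k)" by (simp add: card_cartesian_product card_PiE)
    also have "\<dots> \<le> K ^ k * 4 ^ k" using card_Pmon[of k] by simp
    finally show ?thesis .
  qed
  have Esets: "E vp \<in> sets Q" for vp unfolding E_def by (rule E_sets) simp
  have sub: "{X \<in> space (Q :: (nat \<Rightarrow> real^'d) measure). \<not> no_component_larger r m (K, X)} \<subseteq> (\<Union>vp\<in>F. E vp)"
  proof
    fix X assume X: "X \<in> {X \<in> space (Q :: (nat \<Rightarrow> real^'d) measure). \<not> no_component_larger r m (K, X)}"
    then obtain i where i: "i < K" "m < card (cech_component r K X i)"
      by (auto simp: no_component_larger_def not_le)
    then have "k \<le> card (cech_component r K X i)" by (simp add: k_def)
    from big_comp[OF i(1) this] obtain v p where vp: "v \<in> {..<k} \<rightarrow>\<^sub>E {..<K}" "p \<in> Pmon k"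
      "inj_on v {..<k}" "\<forall>s\<in>{1..<k}. dist (X (v s)) (X (v (p s))) \<le> 2 * r"
      by (auto simp: k_def)
    have "(v, p) \<in> F" using vp by (simp add: F_def)
    moreover have "X \<in> E (v, p)" using X vp(4) \<rho> by (force simp: E_def)
    ultimately show "X \<in> (\<Union>vp\<in>F. E vp)" by blast
  qed
  have EB: "emeasure Q (E vp) \<le> ennreal ((4 * \<rho>) ^ CARD('d)) ^ m" if "vp \<in> F" for vp
  proof -
    have "inj_on (fst vp) {..<k}" "\<forall>s\<in>{1..<k}. snd vp s < s" using that by (auto simp: F_def Pmon_def)
    from E_Q[OF this, of "2*\<rho>"] \<rho> show ?thesis by (simp add: E_def k_def)
  qed
  have "emeasure Q {X \<in> space (Q :: (nat \<Rightarrow> real^'d) measure). \<not> no_component_larger r m (K, X)}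
        \<le> emeasure Q (\<Union>vp\<in>F. E vp)"
    using sub finF Esets by (intro emeasure_mono) auto
  also have "\<dots> \<le> (\<Sum>vp\<in>F. emeasure Q (E vp))"
    using finF Esets by (intro emeasure_subadditive_finite) auto
  also have "\<dots> \<le> (\<Sum>vp\<in>F. ennreal ((4 * \<rho>) ^ CARD('d)) ^ m)"
    using EB by (intro sum_mono) auto
  also have "\<dots> = of_nat (card F) * ennreal ((4 * \<rho>) ^ CARD('d)) ^ m" by simp
  also have "\<dots> = ennreal (real (card F)) * ennreal (((4 * \<rho>) ^ CARD('d)) ^ m)"
    by (subst ennreal_power[symmetric]) (use \<rho> in \<open>auto simp: ennreal_of_nat_eq_real_of_nat\<close>)
  also have "\<dots> = ennreal (real (card F) * ((4 * \<rho>) ^ CARD('d)) ^ m)"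
    by (rule ennreal_mult[symmetric]) (use \<rho> in auto)
  also have "\<dots> \<le> ennreal (real K ^ Suc m * 4 ^ Suc m * ((4 * max r 0) ^ CARD('d)) ^ m)"
  proof (rule ennreal_leI)
    have "real (card F) \<le> real (K ^ k * 4 ^ k)" using cardF by (simp only: of_nat_le_iff)
    then have c: "real (card F) \<le> real K ^ k * 4 ^ k" by simp
    have "real (card F) * ((4 * \<rho>) ^ CARD('d)) ^ m \<le> real K ^ k * 4 ^ k * ((4 * \<rho>) ^ CARD('d)) ^ m"
      by (rule mult_right_mono[OF c]) (use \<rho> in simp)
    then show "real (card F) * ((4 * \<rho>) ^ CARD('d)) ^ m \<le> real K ^ Suc m * 4 ^ Suc m * ((4 * max r 0) ^ CARD('d)) ^ m"
      by (simp only: k_def \<rho>_def)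
  qed
  finally show ?thesis .
qed



lemma pois_2pow:
  assumes "0 < (lam::real)"
  shows "(\<integral>\<^sup>+ K. ennreal (2 ^ K) \<partial>measure_pmf (poisson_pmf lam)) = ennreal (exp lam)"
proof -
  have s: "(\<lambda>K. exp (-lam) * ((2*lam) ^ K / fact K)) sums (exp (-lam) * exp (2*lam))"
    using exp_converges[of "2*lam"] by (intro sums_mult) (simp add: divide_inverse mult.commute)
  have eqf: "pmf (poisson_pmf lam) K * 2 ^ K = exp (-lam) * ((2*lam) ^ K / fact K)" for K
    using assms by (simp add: power_mult_distrib)
  have "(\<integral>\<^sup>+ K. ennreal (2 ^ K) \<partial>measure_pmf (poisson_pmf lam))
      = (\<integral>\<^sup>+ K. ennreal (pmf (poisson_pmf lam) K) * ennreal (2 ^ K) \<partial>count_space UNIV)"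
    by (rule nn_integral_measure_pmf)
  also have "\<dots> = (\<Sum>K. ennreal (exp (-lam) * ((2*lam) ^ K / fact K)))"
    by (subst nn_integral_count_space_nat) (simp add: ennreal_mult'[symmetric] eqf)
  also have "\<dots> = ennreal (exp (-lam) * exp (2*lam))"
    using s assms by (subst suminf_ennreal2) (auto simp: sums_iff)
  also have "exp (-lam) * exp (2*lam) = exp lam" using exp_add[of "-lam" "2*lam"] by simp
  finally show ?thesis .
qed

definition Phi :: "nat \<Rightarrow> nat \<Rightarrow> (nat \<times> nat) set \<Rightarrow> bool" where
  "Phi K m E \<longleftrightarrow> (\<forall>i<K. card {j. j < K \<and> (i, j) \<in> E\<^sup>*} \<le> m)"

lemma good_eq:
  "no_component_larger r m (K, X) \<longleftrightarrow>
     (\<exists>E\<in>{E \<in> Pow ({..<K} \<times> {..<K}). Phi K m E}.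
        \<forall>ij\<in>{..<K} \<times> {..<K}. (ij \<in> E) = (fst ij \<noteq> snd ij \<and> dist (X (fst ij)) (X (snd ij)) \<le> 2 * r))"
proof
  assume g: "no_component_larger r m (K, X)"
  have "cech_edge r K X \<in> {E \<in> Pow ({..<K} \<times> {..<K}). Phi K m E}"
    using g by (auto simp: cech_edge_def Phi_def no_component_larger_def cech_component_def)
  then show "\<exists>E\<in>{E \<in> Pow ({..<K} \<times> {..<K}). Phi K m E}.
        \<forall>ij\<in>{..<K} \<times> {..<K}. (ij \<in> E) = (fst ij \<noteq> snd ij \<and> dist (X (fst ij)) (X (snd ij)) \<le> 2 * r)"
    by (intro bexI[of _ "cech_edge r K X"]) (auto simp: cech_edge_def)
next
  assume "\<exists>E\<in>{E \<in> Pow ({..<K} \<times> {..<K}). Phi K m E}.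
        \<forall>ij\<in>{..<K} \<times> {..<K}. (ij \<in> E) = (fst ij \<noteq> snd ij \<and> dist (X (fst ij)) (X (snd ij)) \<le> 2 * r)"
  then obtain E where E: "E \<subseteq> {..<K} \<times> {..<K}" "Phi K m E"
    "\<forall>ij\<in>{..<K} \<times> {..<K}. (ij \<in> E) = (fst ij \<noteq> snd ij \<and> dist (X (fst ij)) (X (snd ij)) \<le> 2 * r)"
    by auto
  have "E = cech_edge r K X"
  proof (intro set_eqI)
    fix ij :: "nat \<times> nat"
    show "ij \<in> E \<longleftrightarrow> ij \<in> cech_edge r K X"
    proof (cases "ij \<in> {..<K} \<times> {..<K}")
      case True then show ?thesis using E(3) by (cases ij) (auto simp: cech_edge_def)
    next
      case False then show ?thesis using E(1) by (cases ij) (auto simp: cech_edge_def)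
    qed
  qed
  then show "no_component_larger r m (K, X)"
    using E(2) by (simp add: Phi_def no_component_larger_def cech_component_def)
qed

lemma iff_sets:
  assumes "{X \<in> space M. P X} \<in> sets M"
  shows "{X \<in> space M. c = (d \<and> P X)} \<in> sets M"
proof (cases d)
  case True
  show ?thesis
  proof (cases c)
    case True
    then show ?thesis using \<open>d\<close> assms by simp
  next
    case False
    have "{X \<in> space M. c = (d \<and> P X)} = space M - {X \<in> space M. P X}" using False \<open>d\<close> by auto
    then show ?thesis using assms by auto
  qed
next
  case False
  then show ?thesis by (cases c) auto
qed

lemma good_meas:
  "{X \<in> space (Q :: (nat \<Rightarrow> real^'d) measure). no_component_larger r m (K, X)} \<in> sets Q"
proof -
  define A where "A = {E \<in> Pow ({..<K} \<times> {..<K}). Phi K m E}"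
  have finA: "finite A" unfolding A_def by (rule finite_subset[of _ "Pow ({..<K} \<times> {..<K})"]) auto
  have pd: "{X \<in> space (Q :: (nat \<Rightarrow> real^'d) measure). dist (X i) (X j) \<le> 2 * r} \<in> sets Q" for i j :: nat
    by (intro borel_measurable_le borel_measurable_dist comp_meas borel_measurable_const) simp_all
  have inner: "{X \<in> space (Q :: (nat \<Rightarrow> real^'d) measure).
        \<forall>ij\<in>{..<K} \<times> {..<K}. (ij \<in> E) = (fst ij \<noteq> snd ij \<and> dist (X (fst ij)) (X (snd ij)) \<le> 2 * r)} \<in> sets Q" for E
    by (rule sets.sets_Collect_finite_All) (auto intro!: iff_sets pd)
  have eq: "{X \<in> space (Q :: (nat \<Rightarrow> real^'d) measure). no_component_larger r m (K, X)} =
    (\<Union>E\<in>A. {X \<in> space (Q :: (nat \<Rightarrow> real^'d) measure).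
        \<forall>ij\<in>{..<K} \<times> {..<K}. (ij \<in> E) = (fst ij \<noteq> snd ij \<and> dist (X (fst ij)) (X (snd ij)) \<le> 2 * r)})"
    unfolding good_eq A_def by blast
  show ?thesis unfolding eq using finA inner by (intro sets.finite_UN) auto
qed

lemma good_sets:
  "{\<omega> \<in> space (poisson_process lam :: (nat \<times> (nat \<Rightarrow> real^'d)) measure). no_component_larger r m \<omega>}
     \<in> sets (poisson_process lam :: (nat \<times> (nat \<Rightarrow> real^'d)) measure)"
proof -
  have eq: "{\<omega> \<in> space (poisson_process lam :: (nat \<times> (nat \<Rightarrow> real^'d)) measure). no_component_larger r m \<omega>}
     = (\<Union>K. {K} \<times> {X \<in> space (Q :: (nat \<Rightarrow> real^'d) measure). no_component_larger r m (K, X)})"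
    by (auto simp: poisson_process_def space_pair_measure)
  show ?thesis unfolding eq
  proof (rule countable_Un_Int(1))
    fix K :: nat
    show "{K} \<times> {X \<in> space (Q :: (nat \<Rightarrow> real^'d) measure). no_component_larger r m (K, X)}
       \<in> sets (poisson_process lam :: (nat \<times> (nat \<Rightarrow> real^'d)) measure)"
      unfolding poisson_process_def by (rule pair_measureI) (simp_all add: good_meas)
  qed
qed



lemma bad_bound:
  fixes n :: nat and r :: real and m :: nat
  assumes n: "1 \<le> n"
  defines "A \<equiv> (2 * real n) ^ Suc m * 4 ^ Suc m * ((4 * max r 0) ^ CARD('d)) ^ m"
  shows "measure (poisson_process (real n) :: (nat \<times> (nat \<Rightarrow> real^'d)) measure)
           {\<omega> \<in> space (poisson_process (real n)). no_component_larger r m \<omega>}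
         \<ge> 1 - (A + exp (real n) / 4 ^ n)"
proof -
  let ?pois = "measure_pmf (poisson_pmf (real n))"
  let ?P = "poisson_process (real n) :: (nat \<times> (nat \<Rightarrow> real^'d)) measure"
  let ?G = "{\<omega> \<in> space ?P. no_component_larger r m \<omega>}"
  have npos: "0 < real n" using n by simp
  have A0: "0 \<le> A" unfolding A_def by simp
  interpret Qp: prob_space "Q :: (nat \<Rightarrow> real^'d) measure" by (intro prob_space_PiM prob_U)
  interpret PPS: pair_prob_space ?pois "Q :: (nat \<Rightarrow> real^'d) measure"
    by (intro pair_prob_space.intro pair_sigma_finite.intro prob_space_imp_sigma_finite
        prob_space_measure_pmf Qp.prob_space_axioms) 
  have Pdef: "?P = ?pois \<Otimes>\<^sub>M (Q :: (nat \<Rightarrow> real^'d) measure)" by (simp add: poisson_process_def)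
  have Gs: "?G \<in> sets ?P" by (rule good_sets)
  have Bs: "space ?P - ?G \<in> sets ?P" using Gs by auto
  have pre: "Pair K -` (space ?P - ?G) = {X \<in> space (Q :: (nat \<Rightarrow> real^'d) measure). \<not> no_component_larger r m (K, X)}" for K
    by (auto simp: Pdef space_pair_measure)
  have pw: "emeasure (Q :: (nat \<Rightarrow> real^'d) measure) {X \<in> space Q. \<not> no_component_larger r m (K, X)}
            \<le> ennreal A + ennreal (1 / 4 ^ n) * ennreal (2 ^ K)" for K
  proof (cases "K \<le> 2 * n")
    case True
    have "emeasure (Q :: (nat \<Rightarrow> real^'d) measure) {X \<in> space Q. \<not> no_component_larger r m (K, X)}
        \<le> ennreal (real K ^ Suc m * 4 ^ Suc m * ((4 * max r 0) ^ CARD('d)) ^ m)" by (rule bad_K)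
    also have "\<dots> \<le> ennreal A"
    proof (rule ennreal_leI)
      have "real K ^ Suc m \<le> (2 * real n) ^ Suc m"
        using True by (intro power_mono) auto
      then show "real K ^ Suc m * 4 ^ Suc m * ((4 * max r 0) ^ CARD('d)) ^ m \<le> A"
        unfolding A_def by (intro mult_right_mono) auto
    qed
    also have "\<dots> \<le> ennreal A + ennreal (1 / 4 ^ n) * ennreal (2 ^ K)" by simp
    finally show ?thesis .
  next
    case False
    have "emeasure (Q :: (nat \<Rightarrow> real^'d) measure) {X \<in> space Q. \<not> no_component_larger r m (K, X)} \<le> 1"
      by (rule Qp.emeasure_le_1)
    also have "(1::ennreal) \<le> ennreal (1 / 4 ^ n) * ennreal (2 ^ K)"
    proof -
      have "(4::real) ^ n = 2 ^ (2 * n)" by (simp add: power_mult)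
      also have "\<dots> \<le> 2 ^ K" using False by (intro power_increasing) auto
      finally have "1 \<le> 1 / 4 ^ n * (2::real) ^ K" by (simp add: field_simps)
      then show ?thesis by (simp add: ennreal_mult'[symmetric] ennreal_1[symmetric] del: ennreal_1)
    qed
    also have "\<dots> \<le> ennreal A + ennreal (1 / 4 ^ n) * ennreal (2 ^ K)" by simp
    finally show ?thesis .
  qed
  have "emeasure ?P (space ?P - ?G) = (\<integral>\<^sup>+ K. emeasure Q (Pair K -` (space ?P - ?G)) \<partial>?pois)"
    using Bs unfolding Pdef by (rule Qp.emeasure_pair_measure_alt)
  also have "\<dots> \<le> (\<integral>\<^sup>+ K. ennreal A + ennreal (1 / 4 ^ n) * ennreal (2 ^ K) \<partial>?pois)"
    unfolding pre by (intro nn_integral_mono pw)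
  also have "\<dots> = (\<integral>\<^sup>+ K. ennreal A \<partial>?pois) + ennreal (1 / 4 ^ n) * (\<integral>\<^sup>+ K. ennreal (2 ^ K) \<partial>?pois)"
    by (subst nn_integral_add) (simp_all add: nn_integral_cmult)
  also have "\<dots> = ennreal A + ennreal (1 / 4 ^ n) * ennreal (exp (real n))"
    using pois_2pow[OF npos] by (simp add: prob_space.emeasure_space_1[OF prob_space_measure_pmf])
  also have "\<dots> = ennreal (A + exp (real n) / 4 ^ n)"
    using A0 by (simp add: ennreal_mult'[symmetric] ennreal_plus[symmetric] del: ennreal_plus)
  finally have eb: "emeasure ?P (space ?P - ?G) \<le> ennreal (A + exp (real n) / 4 ^ n)" .
  have "measure ?P (space ?P - ?G) \<le> A + exp (real n) / 4 ^ n"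
    using eb A0 by (simp add: Pdef PPS.emeasure_eq_measure ennreal_plus[symmetric] del: ennreal_plus)
  moreover have "measure ?P (space ?P - ?G) = 1 - measure ?P ?G"
    using Gs unfolding Pdef by (rule PPS.prob_compl)
  ultimately show ?thesis by simp
qed



lemma key:
  fixes \<alpha> r C2 :: real and n m d :: nat
  assumes a: "\<alpha> > 0" and n: "4 \<le> n" and d: "1 \<le> d"
    and C2: "C2 = 1 / (16 * 4 ^ d)"
    and hr: "real n * r ^ d \<le> C2 / ln (real n) powr \<alpha>"
    and hm: "real m \<ge> ln (real n) / (\<alpha> * ln (ln (real n)))"
  shows "(2 * real n) ^ Suc m * 4 ^ Suc m * ((4 * max r 0) ^ d) ^ m \<le> 8 * (1/2) ^ m"
proof -
  define L where "L = ln (real n)"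
  define \<rho> where "\<rho> = max r 0"
  have \<rho>0: "0 \<le> \<rho>" by (simp add: \<rho>_def)
  have "exp 1 < real n" using exp_le n by linarith
  then have "ln (exp 1) < ln (real n)" using n by (subst ln_less_cancel_iff) auto
  then have L1: "1 < L" unfolding L_def by simp
  have lnL: "0 < ln L" using L1 by simp
  have Lp: "0 < L powr \<alpha>" using L1 by simp
  have hr': "real n * \<rho> ^ d \<le> C2 / L powr \<alpha>"
  proof (cases "0 \<le> r")
    case True then show ?thesis using hr by (simp add: \<rho>_def L_def)
  next
    case False
    then have "\<rho> = 0" by (simp add: \<rho>_def)
    moreover have "(0::real) ^ d = 0" using d by simp
    moreover have "0 \<le> C2 / L powr \<alpha>" using Lp C2 by simp
    ultimately show ?thesis by (simp add: power_0_left)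
  qed
  define X where "X = 8 * 4 ^ d * real n * \<rho> ^ d"
  have X0: "0 \<le> X" using \<rho>0 by (simp add: X_def)
  have XL: "X \<le> (1/2) / L powr \<alpha>"
  proof -
    have "X = 8 * 4 ^ d * (real n * \<rho> ^ d)" by (simp add: X_def)
    also have "\<dots> \<le> 8 * 4 ^ d * (C2 / L powr \<alpha>)" using hr' by (intro mult_left_mono) auto
    also have "\<dots> = (1/2) / L powr \<alpha>" using C2 Lp by (simp add: field_simps)
    finally show ?thesis .
  qed
  have eqA: "(2 * real n) ^ Suc m * 4 ^ Suc m * ((4 * \<rho>) ^ d) ^ m = 8 * real n * X ^ m"
  proof -
    have e8: "(2::real) ^ m * 4 ^ m = 8 ^ m" by (simp flip: power_mult_distrib)
    show ?thesis using e8 by (simp add: X_def power_mult_distrib algebra_simps)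
  qed
  have "X ^ m \<le> ((1/2) / L powr \<alpha>) ^ m" using XL X0 by (rule power_mono)
  also have "\<dots> = (1/2) ^ m / L powr (real m * \<alpha>)"
    using L1 by (simp add: power_divide powr_power)
  finally have Xm: "X ^ m \<le> (1/2) ^ m / L powr (real m * \<alpha>)" .
  have nL: "real n \<le> L powr (real m * \<alpha>)"
  proof -
    have "L \<le> real m * (\<alpha> * ln L)" using hm a lnL by (simp add: L_def divide_le_eq mult.commute)
    then have "ln (real n) \<le> real m * \<alpha> * ln L" by (simp add: L_def mult.assoc)
    then have "exp (ln (real n)) \<le> exp (real m * \<alpha> * ln L)" by simp
    then show ?thesis using n L1 by (simp add: powr_def)
  qed
  have "8 * real n * X ^ m \<le> 8 * real n * ((1/2) ^ m / L powr (real m * \<alpha>))"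
    using Xm by (intro mult_left_mono) auto
  also have "\<dots> = 8 * (1/2) ^ m * (real n / L powr (real m * \<alpha>))" by simp
  also have "\<dots> \<le> 8 * (1/2) ^ m * 1"
    using nL L1 by (intro mult_left_mono) (auto simp: divide_le_eq)
  finally have fin: "8 * real n * X ^ m \<le> 8 * (1/2) ^ m * 1" .
  have "(2 * real n) ^ Suc m * 4 ^ Suc m * ((4 * max r 0) ^ d) ^ m = 8 * real n * X ^ m"
    using eqA by (simp only: \<rho>_def)
  then show ?thesis using fin by linarith
qed



lemma P_prob:
  assumes "0 < lam"
  shows "prob_space (poisson_process lam :: (nat \<times> (nat \<Rightarrow> real^'d)) measure)"
proof -
  interpret Qp: prob_space "Q :: (nat \<Rightarrow> real^'d) measure" by (intro prob_space_PiM prob_U)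
  interpret PPS: pair_prob_space "measure_pmf (poisson_pmf lam)" "Q :: (nat \<Rightarrow> real^'d) measure"
    by (intro pair_prob_space.intro pair_sigma_finite.intro prob_space_imp_sigma_finite
        prob_space_measure_pmf Qp.prob_space_axioms)
  show ?thesis unfolding poisson_process_def by (rule PPS.prob_space_axioms)
qed

lemma lim1: "filterlim (\<lambda>n::nat. ln (real n) / ln (ln (real n))) at_top sequentially"
  by real_asymp

lemma lim2: "((\<lambda>n::nat. exp (real n) / 4 ^ n) \<longlongrightarrow> 0) sequentially"
proof -
  have "(\<lambda>n. (exp 1 / 4 :: real) ^ n) \<longlonglongrightarrow> 0"
    by (rule LIMSEQ_power_zero) (use exp_le exp_gt_zero[of 1] in simp)
  moreover have "(exp 1 / 4 :: real) ^ n = exp (real n) / 4 ^ n" for n :: nat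
    using exp_of_nat_mult[of n "1::real"] by (simp add: power_divide)
  ultimately show ?thesis by simp
qed

theorem lemma4p2:
  fixes \<alpha> :: real
  assumes "\<alpha> > 0"
  shows "\<exists>C2 > 0. \<forall>(r :: nat \<Rightarrow> real) (m :: nat \<Rightarrow> nat).
     (\<forall>\<^sub>F n in sequentially. real n * r n ^ CARD('d) \<le> C2 / ln (real n) powr \<alpha>
                              \<and> real (m n) \<ge> ln (real n) / (\<alpha> * ln (ln (real n)))) \<longrightarrow>
     ((\<lambda>n. measure (poisson_process (real n) :: (nat \<times> (nat \<Rightarrow> real^'d)) measure)
              {\<omega> \<in> space (poisson_process (real n)). no_component_larger (r n) (m n) \<omega>})
        \<longlonglongrightarrow> 1)"
proof -
  define C2 :: real where "C2 = 1 / (16 * 4 ^ CARD('d))"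
  have C2pos: "C2 > 0" by (simp add: C2_def)
  show ?thesis
  proof (intro exI[of _ C2] conjI allI impI C2pos)
    fix r :: "nat \<Rightarrow> real" and m :: "nat \<Rightarrow> nat"
    assume ev: "\<forall>\<^sub>F n in sequentially. real n * r n ^ CARD('d) \<le> C2 / ln (real n) powr \<alpha>
                              \<and> real (m n) \<ge> ln (real n) / (\<alpha> * ln (ln (real n)))"
    define f where "f n = measure (poisson_process (real n) :: (nat \<times> (nat \<Rightarrow> real^'d)) measure)
              {\<omega> \<in> space (poisson_process (real n)). no_component_larger (r n) (m n) \<omega>}" for n
    define h where "h n = ln (real n) / (\<alpha> * ln (ln (real n)))" for n :: nat
    have htop: "filterlim h at_top sequentially"
    proof -
      have "filterlim (\<lambda>n::nat. (1/\<alpha>) * (ln (real n) / ln (ln (real n)))) at_top sequentially"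
        by (rule filterlim_tendsto_pos_mult_at_top[OF tendsto_const _ lim1]) (use assms in simp)
      then show ?thesis unfolding h_def by (simp add: field_simps)
    qed
    have "filterlim (\<lambda>n. real (m n)) at_top sequentially"
      by (rule filterlim_at_top_mono[OF htop]) (use ev in \<open>auto elim: eventually_mono simp: h_def\<close>)
    then have mtop: "filterlim m sequentially sequentially"
      by (simp add: filterlim_sequentially_iff_filterlim_real)
    have z1: "((\<lambda>n. (1/2::real) ^ (m n)) \<longlongrightarrow> 0) sequentially"
      using filterlim_compose[OF LIMSEQ_power_zero[of "1/2::real"] mtop] by (simp add: o_def)
    define \<delta> where "\<delta> n = 8 * (1/2::real) ^ (m n) + exp (real n) / 4 ^ n" for n
    have \<delta>0: "\<delta> \<longlonglongrightarrow> 0"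
      unfolding \<delta>_def using tendsto_add[OF tendsto_mult_right_zero[OF z1, of 8] lim2] by simp
    have low: "\<forall>\<^sub>F n in sequentially. 1 - \<delta> n \<le> f n"
      using ev eventually_ge_at_top[of "4::nat"]
    proof eventually_elim
      case (elim n)
      have kb: "(2 * real n) ^ Suc (m n) * 4 ^ Suc (m n) * ((4 * max (r n) 0) ^ CARD('d)) ^ (m n) \<le> 8 * (1/2) ^ (m n)"
        by (rule key[OF assms elim(2) _ C2_def]) (use elim(1) in auto)
      have "1 - ((2 * real n) ^ Suc (m n) * 4 ^ Suc (m n) * ((4 * max (r n) 0) ^ CARD('d)) ^ (m n) + exp (real n) / 4 ^ n) \<le> f n"
        unfolding f_def by (rule bad_bound) (use elim(2) in simp)
      then show ?case using kb by (simp add: \<delta>_def)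
    qed
    have up: "\<forall>\<^sub>F n in sequentially. f n \<le> 1"
      using eventually_ge_at_top[of "1::nat"]
    proof eventually_elim
      case (elim n)
      interpret PP: prob_space "poisson_process (real n) :: (nat \<times> (nat \<Rightarrow> real^'d)) measure"
        by (rule P_prob) (use elim in simp)
      show ?case unfolding f_def by (rule PP.prob_le_1)
    qed
    have "(\<lambda>n. 1 - \<delta> n) \<longlonglongrightarrow> 1" using tendsto_diff[OF tendsto_const \<delta>0, of 1] by simp
    then show "f \<longlonglongrightarrow> 1"
      by (rule tendsto_sandwich[OF low up _ tendsto_const])
  qed
qed

end
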